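(* (i) For every even $n$ and every integer $k$ with $4\le k\le n$, every one-factorization of $K_n$ has a set $S$ of $k$ vertices with deficit $D(S)\ge k-3$. (ii) For every integer $d\ge -2$ there are $C>0$ and $n_0$ such that for every even $n\ge n_0$, every one-factorization of $K_n$ has a set $S$ of $k\le C\log n$ vertices (for some $k\ge1$) with deficit $D(S)\ge k+d$.
   Context: A one-factorization of $K_n$ ($n$ even) is a proper edge-coloring of $K_n$ with $n-1$ colors, so each color class is a perfect matching. For a set $S$ of vertices, $\gamma(S)$ is the number of distinct colors appearing on edges with both endpoints in $S$, and the deficit of $S$ is $D(S)=\binom{|S|}{2}-\gamma(S)$. *)

theory Defs
  imports "HOL-Analysis.Analysis"
begin

text \<open>The complete graph K_n has vertex set {0..<n}. An edge colouring is a
function c on ordered pairs of vertices, required to be symmetric; c x y is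
the colour of the edge {x,y} for x \<noteq> y (values on the diagonal are irrelevant).\<close>

definition one_factorization :: "nat \<Rightarrow> (nat \<Rightarrow> nat \<Rightarrow> nat) \<Rightarrow> bool" where
  "one_factorization n c \<longleftrightarrow>
     (\<forall>x<n. \<forall>y<n. x \<noteq> y \<longrightarrow> c x y = c y x) \<and>
     (\<forall>x<n. \<forall>y<n. x \<noteq> y \<longrightarrow> c x y < n - 1) \<and>
     (\<forall>x<n. \<forall>y<n. \<forall>z<n. x \<noteq> y \<and> x \<noteq> z \<and> y \<noteq> z \<longrightarrow> c x y \<noteq> c x z)"

definition colours_in :: "(nat \<Rightarrow> nat \<Rightarrow> nat) \<Rightarrow> nat set \<Rightarrow> nat set" where
  "colours_in c S = {c x y | x y. x \<in> S \<and> y \<in> S \<and> x \<noteq> y}"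

definition gamma :: "(nat \<Rightarrow> nat \<Rightarrow> nat) \<Rightarrow> nat set \<Rightarrow> nat" where
  "gamma c S = card (colours_in c S)"

definition deficit :: "(nat \<Rightarrow> nat \<Rightarrow> nat) \<Rightarrow> nat set \<Rightarrow> int" where
  "deficit c S = int (card S choose 2) - int (gamma c S)"

end

theory Submission
  imports Defs
begin


lemma of_sym: "one_factorization n c \<Longrightarrow> x<n \<Longrightarrow> y<n \<Longrightarrow> x\<noteq>y \<Longrightarrow> c x y = c y x"
  unfolding one_factorization_def by blast
lemma of_lt: "one_factorization n c \<Longrightarrow> x<n \<Longrightarrow> y<n \<Longrightarrow> x\<noteq>y \<Longrightarrow> c x y < n - 1"
  unfolding one_factorization_def by blast
lemma of_inj: "one_factorization n c \<Longrightarrow> x<n \<Longrightarrow> y<n \<Longrightarrow> z<n \<Longrightarrow> x\<noteq>y \<Longrightarrow> x\<noteq>z \<Longrightarrow> y\<noteq>z \<Longrightarrow> c x y \<noteq> c x z"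
  unfolding one_factorization_def by blast

lemma of_image:
  assumes "one_factorization n c" "x < n"
  shows "c x ` ({0..<n} - {x}) = {0..<n-1}" "inj_on (c x) ({0..<n} - {x})"
proof -
  show inj: "inj_on (c x) ({0..<n} - {x})"
  proof (rule inj_onI)
    fix a b assume "a \<in> {0..<n} - {x}" "b \<in> {0..<n} - {x}" "c x a = c x b"
    then show "a = b" using of_inj[OF assms(1) assms(2), of a b] by auto
  qed
  have sub: "c x ` ({0..<n} - {x}) \<subseteq> {0..<n-1}"
  proof (rule image_subsetI)
    fix y assume "y \<in> {0..<n} - {x}"
    then show "c x y \<in> {0..<n-1}" using of_lt[OF assms(1) assms(2), of y] by auto
  qed
  have "card (c x ` ({0..<n} - {x})) = n - 1"
    using card_image[OF inj] assms(2) by simp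
  then show "c x ` ({0..<n} - {x}) = {0..<n-1}"
    using card_subset_eq[OF _ sub] by simp
qed

lemma of_surj:
  assumes "one_factorization n c" "x < n" "col < n - 1"
  shows "\<exists>z<n. z \<noteq> x \<and> c x z = col"
proof -
  have "col \<in> c x ` ({0..<n} - {x})" using of_image(1)[OF assms(1,2)] assms(3) by simp
  then show ?thesis by auto
qed

lemma colours_insert:
  assumes "one_factorization n c" "S \<subseteq> {0..<n}" "v < n" "v \<notin> S"
  shows "colours_in c (insert v S) = colours_in c S \<union> c v ` S"
proof (intro equalityI subsetI)
  fix z assume "z \<in> colours_in c (insert v S)"
  then obtain x y where xy: "x \<in> insert v S" "y \<in> insert v S" "x \<noteq> y" "z = c x y"
    unfolding colours_in_def by blast
  show "z \<in> colours_in c S \<union> c v ` S"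
  proof (cases "x = v")
    case True then show ?thesis using xy by auto
  next
    case False
    show ?thesis
    proof (cases "y = v")
      case True
      have "x < n" using xy False assms(2) by auto
      then have "c x y = c v x" using True of_sym[OF assms(1), of x v] assms(3) xy(3) by auto
      then show ?thesis using xy False by auto
    next
      case False2: False
      then show ?thesis using xy False unfolding colours_in_def by auto
    qed
  qed
next
  fix z assume "z \<in> colours_in c S \<union> c v ` S"
  then show "z \<in> colours_in c (insert v S)"
  proof
    assume "z \<in> colours_in c S" then show ?thesis unfolding colours_in_def by blast
  next
    assume "z \<in> c v ` S"
    then obtain y where "y \<in> S" "z = c v y" by blast
    then show ?thesis using assms(4) unfolding colours_in_def by blast
  qed
qed

lemma colours_fin: "finite S \<Longrightarrow> finite (colours_in c S)"
proof -
  assume "finite S"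
  have "colours_in c S \<subseteq> (\<lambda>(x,y). c x y) ` (S \<times> S)" unfolding colours_in_def by auto
  then show ?thesis using \<open>finite S\<close> finite_subset by blast
qed

lemma deficit_insert:
  assumes "one_factorization n c" "S \<subseteq> {0..<n}" "v < n" "v \<notin> S"
    and "card ((c v ` S) - colours_in c S) \<le> m"
  shows "deficit c (insert v S) \<ge> deficit c S + int (card S) - int m"
proof -
  have fS: "finite S" using assms(2) finite_subset by blast
  have "gamma c (insert v S) = card (colours_in c S \<union> (c v ` S - colours_in c S))"
    unfolding gamma_def colours_insert[OF assms(1-4)] by (metis Un_Diff_cancel)
  also have "\<dots> = gamma c S + card (c v ` S - colours_in c S)"
    unfolding gamma_def by (rule card_Un_disjoint) (auto intro: colours_fin fS)
  finally have g: "gamma c (insert v S) \<le> gamma c S + m" using assms(5) by simp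
  have "card (insert v S) choose 2 = (card S choose 2) + card S"
    using fS assms(4) by (simp add: numeral_2_eq_2)
  then show ?thesis using g unfolding deficit_def by simp
qed




lemma gamma_single: "gamma c {x} = 0"
  unfolding gamma_def colours_in_def by simp

lemma exists_outside:
  assumes "S \<subseteq> {0..<n}" "card S < n"
  shows "\<exists>v<n. v \<notin> S"
proof (rule ccontr)
  assume "\<not> ?thesis"
  then have "{0..<n} \<subseteq> S" by auto
  then have "n \<le> card S" using card_mono[OF _ \<open>{0..<n} \<subseteq> S\<close>] assms(1) finite_subset by fastforce
  then show False using assms(2) by simp
qed

lemma part1_aux:
  assumes of: "one_factorization n c" and j: "1 \<le> j"
  shows "j \<le> n \<longrightarrow> (\<exists>S. S \<subseteq> {0..<n} \<and> card S = j \<and> deficit c S \<ge> max 0 (int j - 3))"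
  using j
proof (induction j rule: nat_induct_at_least)
  case base
  show ?case
  proof
    assume "1 \<le> n"
    then have "{0} \<subseteq> {0..<n}" by auto
    moreover have "deficit c {0} = 0" unfolding deficit_def gamma_single by simp
    ultimately show "\<exists>S. S \<subseteq> {0..<n} \<and> card S = 1 \<and> deficit c S \<ge> max 0 (int 1 - 3)"
      by (intro exI[of _ "{0}"]) auto
  qed
next
  case (Suc j)
  show ?case
  proof
    assume jn: "Suc j \<le> n"
    then obtain S where S: "S \<subseteq> {0..<n}" "card S = j" "deficit c S \<ge> max 0 (int j - 3)"
      using Suc.IH by auto
    have fS: "finite S" using S(1) finite_subset by blast
    have Sne: "S \<noteq> {}" using S(2) Suc.hyps by auto
    then obtain s0 where s0: "s0 \<in> S" by blast
    have s0n: "s0 < n" using s0 S(1) by auto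
    have gen: "deficit c (insert v S) \<ge> deficit c S" if "v < n" "v \<notin> S" for v
    proof -
      have "card (c v ` S - colours_in c S) \<le> card S"
        by (meson Diff_subset card_image_le card_mono fS finite_imageI order_trans)
      from deficit_insert[OF of S(1) that this] show ?thesis by simp
    qed
    have cardins: "card (insert v S) = Suc j" if "v \<notin> S" for v using that fS S(2) by simp
    show "\<exists>S. S \<subseteq> {0..<n} \<and> card S = Suc j \<and> deficit c S \<ge> max 0 (int (Suc j) - 3)"
    proof (cases "j < 3")
      case True
      obtain v where v: "v < n" "v \<notin> S" using exists_outside[OF S(1)] S(2) jn by auto
      have "deficit c (insert v S) \<ge> max 0 (int (Suc j) - 3)" using gen[OF v] S(3) True by simp
      then show ?thesis using v S(1) cardins[OF v(2)] by (intro exI[of _ "insert v S"]) auto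
    next
      case False
      let ?P = "c s0 ` (S - {s0})"
      show ?thesis
      proof (cases "colours_in c S \<subseteq> ?P")
        case True
        have "gamma c S \<le> card ?P" unfolding gamma_def
          using True by (simp add: card_mono fS)
        also have "\<dots> \<le> card (S - {s0})" using card_image_le fS by blast
        finally have gS: "gamma c S \<le> j - 1" using S(2) s0 fS by simp
        obtain v where v: "v < n" "v \<notin> S" using exists_outside[OF S(1)] S(2) jn by auto
        have "card (c v ` S - colours_in c S) \<le> card S"
          by (meson Diff_subset card_image_le card_mono fS finite_imageI order_trans)
        from deficit_insert[OF of S(1) v this]
        have d1: "deficit c (insert v S) \<ge> deficit c S" by simp
        have "deficit c S \<ge> int (j choose 2) - int (j - 1)" unfolding deficit_def using gS S(2) by simp
        moreover have "2 * (j choose 2) = j * (j - 1)"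
        proof -
          have "even (j * (j - 1))" by (cases "even j") auto
          then show ?thesis unfolding choose_two by simp
        qed
        moreover have "j * (j - 1) \<ge> 4 * j - 6"
        proof -
          have "(j - 2) * (j - 3) \<ge> 0" by simp
          obtain m where "j = m + 3" using False by (metis add.commute le_Suc_ex not_less)
          then show ?thesis by (simp add: algebra_simps)
        qed
        ultimately have "deficit c S \<ge> int j - 2" using False by linarith
        then have "deficit c (insert v S) \<ge> max 0 (int (Suc j) - 3)" using d1 False by simp
        then show ?thesis using v S(1) cardins[OF v(2)] by (intro exI[of _ "insert v S"]) auto
      next
        case False2: False
        then obtain col where col: "col \<in> colours_in c S" "col \<notin> ?P" by blast
        then obtain x y where xy: "x \<in> S" "y \<in> S" "x \<noteq> y" "col = c x y" unfolding colours_in_def by blast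
        have "x < n" "y < n" using xy(1,2) S(1) by auto
        then have "col < n - 1" using xy(3,4) of_lt[OF of, of x y] by auto
        then obtain z where z: "z < n" "z \<noteq> s0" "c s0 z = col" using of_surj[OF of s0n] by blast
        have zS: "z \<notin> S" using z col(2) by auto
        have czs: "c z s0 = col" using z of_sym[OF of z(1) s0n] by auto
        have "c z ` S - colours_in c S \<subseteq> c z ` (S - {s0})" using czs col(1) by auto
        then have "card (c z ` S - colours_in c S) \<le> card (c z ` (S - {s0}))"
          by (simp add: card_mono fS)
        also have "\<dots> \<le> card (S - {s0})" using card_image_le fS by blast
        finally have "card (c z ` S - colours_in c S) \<le> j - 1" using S(2) s0 fS by simp
        from deficit_insert[OF of S(1) z(1) zS this]
        have "deficit c (insert z S) \<ge> deficit c S + int j - int (j - 1)" using S(2) by simp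
        then have "deficit c (insert z S) \<ge> max 0 (int (Suc j) - 3)" using S(3) False by simp
        then show ?thesis using z S(1) cardins[OF zS] by (intro exI[of _ "insert z S"]) auto
      qed
    qed
  qed
qed

lemma part1:
  "\<forall>n k c. even n \<and> 4 \<le> k \<and> k \<le> n \<and> one_factorization n c \<longrightarrow>
            (\<exists>S. S \<subseteq> {0..<n} \<and> card S = k \<and> deficit c S \<ge> int k - 3)"
proof (intro allI impI)
  fix n k c assume h: "even (n::nat) \<and> 4 \<le> k \<and> k \<le> n \<and> one_factorization n c"
  then have "1 \<le> k" by simp
  from part1_aux[OF _ this, of n c] h show "\<exists>S. S \<subseteq> {0..<n} \<and> card S = k \<and> deficit c S \<ge> int k - 3"
    by force
qed




fun ball :: "(nat \<Rightarrow> nat \<Rightarrow> bool) \<Rightarrow> nat \<Rightarrow> nat \<Rightarrow> nat set" where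
  "ball adj v 0 = {v}"
| "ball adj v (Suc j) = ball adj v j \<union> {y. \<exists>x\<in>ball adj v j. adj x y}"

locale grph =
  fixes adj :: "nat \<Rightarrow> nat \<Rightarrow> bool" and n :: nat and v :: nat
  assumes adj_sym: "adj x y \<Longrightarrow> adj y x"
    and adj_bd: "adj x y \<Longrightarrow> x < n \<and> y < n"
    and adj_irr: "adj x y \<Longrightarrow> x \<noteq> y"
    and vn: "v < n"
begin

abbreviation "B \<equiv> ball adj v"
definition "lev x = (LEAST j. x \<in> B j)"
definition "par x = (SOME y. y \<in> B (lev x - 1) \<and> adj y x)"
definition "P x = (\<lambda>i. (par^^i) x) ` {0..lev x}"
definition "edge y = (min y (par y), max y (par y))"
definition "E X = {(x,y). x\<in>X \<and> y\<in>X \<and> x<y \<and> adj x y}"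
definition "NT X = E X - edge ` (X - {v})"

lemma B_sub: "B j \<subseteq> {0..<n}"
  by (induction j) (use vn adj_bd in auto)

lemma B_fin: "finite (B j)"
  using B_sub finite_subset by blast

lemma B_mono: "i \<le> j \<Longrightarrow> B i \<subseteq> B j"
proof (induction j)
  case 0 then show ?case by simp
next
  case (Suc j) then show ?case by (cases "i = Suc j") auto
qed

lemma v_B: "v \<in> B j"
  using B_mono[of 0 j] by auto

lemma B_adj: "x \<in> B j \<Longrightarrow> adj x y \<Longrightarrow> y \<in> B (Suc j)"
  by auto

lemma lev_le: "x \<in> B j \<Longrightarrow> lev x \<le> j"
  unfolding lev_def by (rule Least_le)

lemma lev_in: "x \<in> B j \<Longrightarrow> x \<in> B (lev x)"
  unfolding lev_def by (rule LeastI)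

lemma lev0: "x \<in> B j \<Longrightarrow> lev x = 0 \<Longrightarrow> x = v"
  using lev_in by fastforce

lemma lev_v: "lev v = 0"
  using lev_le[of v 0] by simp

lemma par_props:
  assumes "x \<in> B j" "x \<noteq> v"
  shows "par x \<in> B (lev x - 1)" "adj (par x) x" "lev (par x) = lev x - 1" "lev x \<ge> 1"
proof -
  have "lev x \<noteq> 0" using lev0[OF assms(1)] assms(2) by blast
  then obtain m where m: "lev x = Suc m" by (cases "lev x") auto
  have xin: "x \<in> B (Suc m)" using lev_in[OF assms(1)] m by simp
  have "x \<notin> B m" using not_less_Least[of m "\<lambda>j. x \<in> B j"] m unfolding lev_def by simp
  then have "\<exists>y. y \<in> B (lev x - 1) \<and> adj y x" using xin m by auto
  from someI_ex[OF this] have pp: "par x \<in> B (lev x - 1)" "adj (par x) x" unfolding par_def by blast+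
  then show "par x \<in> B (lev x - 1)" "adj (par x) x" by blast+
  have "lev (par x) \<le> lev x - 1" using lev_le[OF pp(1)] .
  moreover have "x \<in> B (Suc (lev (par x)))" using B_adj[OF lev_in[OF pp(1)] pp(2)] .
  then have "lev x \<le> Suc (lev (par x))" by (rule lev_le)
  ultimately show "lev (par x) = lev x - 1" by simp
  show "lev x \<ge> 1" using m by simp
qed

lemma iter_props:
  assumes "x \<in> B j"
  shows "i \<le> lev x \<Longrightarrow> (par^^i) x \<in> B (lev x - i) \<and> lev ((par^^i) x) = lev x - i"
proof (induction i)
  case 0 then show ?case using lev_in[OF assms] by simp
next
  case (Suc i)
  let ?y = "(par^^i) x"
  have y: "?y \<in> B (lev x - i)" "lev ?y = lev x - i" using Suc by auto
  have "?y \<noteq> v" using y(2) Suc.prems lev_v by auto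
  from par_props[OF y(1) this] y show ?case by simp
qed

lemma P_sub: "x \<in> B j \<Longrightarrow> P x \<subseteq> B j"
proof
  fix y assume x: "x \<in> B j" and "y \<in> P x"
  then obtain i where i: "i \<le> lev x" "y = (par^^i) x" unfolding P_def by auto
  have "y \<in> B (lev x - i)" using iter_props[OF x i(1)] i by simp
  moreover have "lev x - i \<le> j" using lev_le[OF x] by simp
  ultimately show "y \<in> B j" using B_mono by blast
qed

lemma P_card: "x \<in> B j \<Longrightarrow> card (P x) \<le> j + 1"
proof -
  assume x: "x \<in> B j"
  have "card (P x) \<le> card {0..lev x}" unfolding P_def by (rule card_image_le) simp
  then show ?thesis using lev_le[OF x] by simp
qed

lemma P_self: "x \<in> P x"
proof -
  have "(par^^0) x \<in> P x" unfolding P_def by (rule imageI) simp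
  then show ?thesis by simp
qed

lemma P_closed:
  assumes x: "x \<in> B j" and y: "y \<in> P x" "y \<noteq> v"
  shows "par y \<in> P x"
proof -
  obtain i where i: "i \<le> lev x" "y = (par^^i) x" using y(1) unfolding P_def by auto
  have ly: "lev y = lev x - i" using iter_props[OF x i(1)] i by simp
  have "i \<noteq> lev x" using ly y(2) lev0 iter_props[OF x i(1)] i by force
  then have "Suc i \<le> lev x" using i by simp
  then have "(par^^(Suc i)) x \<in> P x" unfolding P_def by (intro imageI) simp
  then show ?thesis using i by simp
qed

lemma edge_set: "{fst (edge y), snd (edge y)} = {y, par y}"
  unfolding edge_def by (auto simp: min_def max_def)

lemma edge_in_E:
  assumes "y \<in> B j" "y \<noteq> v" "y \<in> X" "par y \<in> X"
  shows "edge y \<in> E X"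
proof -
  have a: "adj (par y) y" using par_props[OF assms(1,2)] by blast
  then have "par y \<noteq> y" using adj_irr by blast
  then show ?thesis using a adj_sym[OF a] assms(3,4) unfolding edge_def E_def
    by (auto simp: min_def max_def)
qed

lemma edge_inj: "inj_on edge (B j - {v})"
proof (rule inj_onI)
  fix y z assume y: "y \<in> B j - {v}" and z: "z \<in> B j - {v}" and e: "edge y = edge z"
  show "y = z"
  proof (rule ccontr)
    assume yz: "y \<noteq> z"
    have "{y, par y} = {z, par z}" using edge_set[of y] edge_set[of z] e by simp
    then have "y = par z" "z = par y" using yz by auto
    moreover have "lev (par z) = lev z - 1" "lev z \<ge> 1" using par_props[of z j] z by auto
    moreover have "lev (par y) = lev y - 1" "lev y \<ge> 1" using par_props[of y j] y by auto
    ultimately show False by simp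
  qed
qed

lemma E_fin: "finite X \<Longrightarrow> finite (E X)"
proof -
  assume "finite X"
  moreover have "E X \<subseteq> X \<times> X" unfolding E_def by auto
  ultimately show ?thesis using finite_subset by blast
qed

lemma E_decomp: "card (E (B j)) = card (B j) - 1 + card (NT (B j))"
proof -
  have sub: "edge ` (B j - {v}) \<subseteq> E (B j)"
  proof
    fix e assume "e \<in> edge ` (B j - {v})"
    then obtain y where y: "y \<in> B j" "y \<noteq> v" "e = edge y" by auto
    have "lev y - 1 \<le> j" using lev_le[OF y(1)] by simp
    then have "par y \<in> B j" using par_props(1)[OF y(1,2)] B_mono[of "lev y - 1" j] by blast
    then show "e \<in> E (B j)" using edge_in_E[OF y(1,2) y(1)] y by simp
  qed
  have "card (E (B j)) = card (edge ` (B j - {v})) + card (NT (B j))"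
    unfolding NT_def using card_Diff_subset[OF finite_subset[OF sub E_fin[OF B_fin]] sub]
      card_mono[OF E_fin[OF B_fin] sub] by simp
  also have "card (edge ` (B j - {v})) = card (B j) - 1"
    using card_image[OF edge_inj[of j]] v_B[of j] B_fin by simp
  finally show ?thesis .
qed

lemma NT_mono: "i \<le> j \<Longrightarrow> NT (B i) \<subseteq> NT (B j)"
proof
  fix e assume ij: "i \<le> j" and e: "e \<in> NT (B i)"
  then have eE: "e \<in> E (B i)" and ne: "e \<notin> edge ` (B i - {v})" unfolding NT_def by auto
  have "e \<in> E (B j)" using eE B_mono[OF ij] unfolding E_def by auto
  moreover have "e \<notin> edge ` (B j - {v})"
  proof
    assume "e \<in> edge ` (B j - {v})"
    then obtain y where y: "y \<in> B j" "y \<noteq> v" "e = edge y" by auto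
    have "fst e \<in> B i" "snd e \<in> B i" using eE unfolding E_def by auto
    moreover have "y \<in> {fst (edge y), snd (edge y)}" using edge_set[of y] by simp
    ultimately have "y \<in> B i" using y(3) by auto
    then show False using ne y by auto
  qed
  ultimately show "e \<in> NT (B j)" unfolding NT_def by simp
qed

end



context grph begin

lemma arcs_bound:
  assumes deg: "\<forall>x<n. card {y. adj x y} \<ge> \<delta>"
  shows "\<delta> * card (B j) \<le> 2 * card (E (B (Suc j)))"
proof -
  let ?S = "Sigma (B j) (\<lambda>x. {y. adj x y})"
  have fin: "\<forall>x\<in>B j. finite {y. adj x y}"
  proof
    fix x have "{y. adj x y} \<subseteq> {0..<n}" using adj_bd by auto
    then show "finite {y. adj x y}" by (rule finite_subset) simp
  qed
  have "\<delta> * card (B j) \<le> (\<Sum>x\<in>B j. card {y. adj x y})"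
  proof -
    have "\<And>i. i \<in> B j \<Longrightarrow> \<delta> \<le> card {y. adj i y}"
    proof -
      fix i assume "i \<in> B j" then have "i \<in> {0..<n}" using B_sub[of j] by blast
      then have "i < n" by simp
      then show "\<delta> \<le> card {y. adj i y}" using deg by blast
    qed
    then show ?thesis using sum_bounded_below[of "B j" \<delta> "\<lambda>x. card {y. adj x y}"] by (simp add: mult.commute)
  qed
  also have "\<dots> = card ?S" using card_SigmaI[OF B_fin fin] by simp
  also have "?S \<subseteq> E (B (Suc j)) \<union> prod.swap ` E (B (Suc j))"
  proof
    fix p assume "p \<in> ?S"
    then obtain x y where p: "p = (x,y)" "x \<in> B j" "adj x y" by auto
    have xy: "x \<in> B (Suc j)" "y \<in> B (Suc j)" using p by auto
    have "x \<noteq> y" using adj_irr p by blast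
    then show "p \<in> E (B (Suc j)) \<union> prod.swap ` E (B (Suc j))"
    proof (cases "x < y")
      case True then show ?thesis using p xy unfolding E_def by auto
    next
      case False
      then have "(y,x) \<in> E (B (Suc j))" using p xy adj_sym \<open>x \<noteq> y\<close> unfolding E_def by auto
      then show ?thesis using p by (auto intro: image_eqI[of _ _ "(y,x)"])
    qed
  qed
  then have "card ?S \<le> card (E (B (Suc j)) \<union> prod.swap ` E (B (Suc j)))"
    by (intro card_mono finite_UnI finite_imageI E_fin B_fin)
  also have "\<dots> \<le> card (E (B (Suc j))) + card (prod.swap ` E (B (Suc j)))" by (rule card_Un_le)
  also have "\<dots> \<le> 2 * card (E (B (Suc j)))" using card_image_le[OF E_fin[OF B_fin], of prod.swap "Suc j"] by (simp del: ball.simps)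
  finally show ?thesis .
qed

lemma main_graph:
  assumes deg: "\<forall>x<n. card {y. adj x y} \<ge> \<delta>" and d4: "\<delta> \<ge> 4"
    and cond: "2 * Q \<le> (\<delta> - 4) * (\<delta> + 1) + 2" and nR: "n < 2 ^ R"
  shows "\<exists>X. X \<subseteq> {0..<n} \<and> X \<noteq> {} \<and> card X \<le> 2 * (Q + 1) * (R + 1) \<and> card (E X) \<ge> card X + Q"
proof (cases "card (NT (B R)) \<ge> Q + 1")
  case True
  then obtain F where F: "F \<subseteq> NT (B R)" "card F = Q + 1" "finite F"
    using obtain_subset_with_card_n by metis
  have FE: "fst p \<in> B R \<and> snd p \<in> B R \<and> fst p < snd p \<and> adj (fst p) (snd p)" if "p \<in> F" for p
    using that F(1) unfolding NT_def E_def by auto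
  define X where "X = (\<Union>p\<in>F. P (fst p) \<union> P (snd p))"
  have XB: "X \<subseteq> B R" unfolding X_def using FE P_sub by blast
  have "card X \<le> (\<Sum>p\<in>F. card (P (fst p) \<union> P (snd p)))"
    unfolding X_def by (rule card_UN_le[OF F(3)])
  also have "\<dots> \<le> (\<Sum>p\<in>F. 2 * (R + 1))"
  proof (rule sum_mono)
    fix p assume p: "p \<in> F"
    have "card (P (fst p) \<union> P (snd p)) \<le> card (P (fst p)) + card (P (snd p))" by (rule card_Un_le)
    also have "\<dots> \<le> 2 * (R + 1)" using P_card[of "fst p" R] P_card[of "snd p" R] FE[OF p] by simp
    finally show "card (P (fst p) \<union> P (snd p)) \<le> 2 * (R + 1)" .
  qed
  also have "\<dots> = 2 * (Q + 1) * (R + 1)" using F(2) by simp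
  finally have cX: "card X \<le> 2 * (Q + 1) * (R + 1)" .
  have "F \<noteq> {}" using F(2) by auto
  then obtain p where "p \<in> F" by blast
  then have "fst p \<in> X" unfolding X_def using P_self by blast
  then have Xne: "X \<noteq> {}" by blast
  have finX: "finite X" using XB B_fin finite_subset by blast
  have sub1: "edge ` (X - {v}) \<subseteq> E X"
  proof
    fix e assume "e \<in> edge ` (X - {v})"
    then obtain y where y: "y \<in> X" "y \<noteq> v" "e = edge y" by auto
    then obtain p where p: "p \<in> F" "y \<in> P (fst p) \<union> P (snd p)" unfolding X_def by auto
    have "par y \<in> P (fst p) \<union> P (snd p)" using p(2) P_closed[of "fst p" R y] P_closed[of "snd p" R y] FE[OF p(1)] y(2) by blast
    then have "par y \<in> X" unfolding X_def using p(1) by blast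
    then show "e \<in> E X" using edge_in_E[of y R X] y XB by auto
  qed
  have sub2: "F \<subseteq> E X"
  proof
    fix p assume p: "p \<in> F"
    have "fst p \<in> X" "snd p \<in> X" unfolding X_def using p P_self by blast+
    then show "p \<in> E X" using FE[OF p] unfolding E_def by (cases p) auto
  qed
  have disj: "edge ` (X - {v}) \<inter> F = {}" using F(1) XB unfolding NT_def by auto
  have "card (edge ` (X - {v}) \<union> F) = card (edge ` (X - {v})) + card F"
    by (rule card_Un_disjoint) (use finX F(3) disj in auto)
  also have "card (edge ` (X - {v})) = card (X - {v})"
    by (rule card_image) (rule inj_on_subset[OF edge_inj[of R]], use XB in auto)
  finally have "card (edge ` (X - {v}) \<union> F) = card (X - {v}) + Q + 1" using F(2) by simp
  moreover have "card (edge ` (X - {v}) \<union> F) \<le> card (E X)"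
    using sub1 sub2 by (intro card_mono E_fin finX) auto
  moreover have "card X \<le> card (X - {v}) + 1"
  proof -
    have "card X \<le> card (insert v (X - {v}))" by (rule card_mono) (use finX in auto)
    also have "\<dots> \<le> card (X - {v}) + 1" using finX by (cases "v \<in> X") (auto simp: card_insert_if)
    finally show ?thesis .
  qed
  ultimately have "card (E X) \<ge> card X + Q" by simp
  then show ?thesis using XB B_sub cX Xne by blast
next
  case False
  then have ntQ: "card (NT (B R)) \<le> Q" by simp
  have eb: "card (E (B j)) \<le> card (B j) - 1 + Q" if "j \<le> R" for j
  proof -
    have "card (NT (B j)) \<le> card (NT (B R))"
      by (rule card_mono[OF _ NT_mono[OF that]]) (simp add: NT_def E_fin B_fin)
    then show ?thesis using E_decomp[of j] ntQ by simp
  qed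
  have grow: "card (B j) \<ge> 2 ^ j \<and> card (B j) \<ge> \<delta> + 1" if "1 \<le> j" "j \<le> R" for j
    using that
  proof (induction j rule: nat_induct_at_least)
    case base
    have "B 1 = insert v {y. adj v y}" by auto
    moreover have "v \<notin> {y. adj v y}" using adj_irr by blast
    moreover have "finite {y. adj v y}"
    proof -
      have "{y. adj v y} \<subseteq> {0..<n}" using adj_bd by auto
      then show ?thesis by (rule finite_subset) simp
    qed
    ultimately have "card (B 1) = card {y. adj v y} + 1" by simp
    then show ?case using deg vn d4 by force
  next
    case (Suc j)
    let ?b = "card (B j)" and ?b' = "card (B (Suc j))"
    have ih: "?b \<ge> 2 ^ j" "?b \<ge> \<delta> + 1" using Suc by auto
    have a: "\<delta> * ?b \<le> 2 * card (E (B (Suc j)))" by (rule arcs_bound[OF deg])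
    have e: "card (E (B (Suc j))) \<le> ?b' - 1 + Q" using eb[of "Suc j"] Suc.prems by blast
    have mono: "?b \<le> ?b'" using card_mono[OF B_fin B_mono[of j "Suc j"]] by simp
    have m1: "(\<delta> - 4) * (\<delta> + 1) \<le> (\<delta> - 4) * ?b" using ih(2) by (rule mult_le_mono2)
    have m2: "\<delta> * ?b = 4 * ?b + (\<delta> - 4) * ?b" using d4 by (metis add_mult_distrib le_add_diff_inverse)
    have "?b' \<ge> 1" using mono ih(2) by simp
    then have "2 * ?b' \<ge> 4 * ?b" using a e m1 m2 cond by linarith
    then have "?b' \<ge> 2 * ?b" by simp
    then show ?case using ih mono by simp
  qed
  have "R \<ge> 1" using nR vn by (cases R) auto
  then have "card (B R) \<ge> 2 ^ R" using grow by blast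
  moreover have "card (B R) \<le> n" using card_mono[OF _ B_sub] by fastforce
  ultimately show ?thesis using nR by simp
qed

end



lemma card_pairs:
  assumes "finite S"
  shows "card {(x,y). x \<in> S \<and> y \<in> S \<and> x < (y::nat)} = card S choose 2"
proof -
  let ?H = "{(x,y). x \<in> S \<and> y \<in> S \<and> x < (y::nat)}"
  let ?f = "\<lambda>(x,y). {x,y}"
  have inj: "inj_on ?f ?H"
  proof (rule inj_onI)
    fix p q assume p: "p \<in> ?H" and q: "q \<in> ?H" and e: "?f p = ?f q"
    obtain a b where ab: "p = (a,b)" "a < b" using p by auto
    obtain a' b' where ab': "q = (a',b')" "a' < b'" using q by auto
    have "{a,b} = {a',b'}" using e ab ab' by simp
    then have "a = a' \<and> b = b'" using ab(2) ab'(2) by (auto simp: doubleton_eq_iff)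
    then show "p = q" using ab ab' by simp
  qed
  have img: "?f ` ?H = {B. B \<subseteq> S \<and> card B = 2}"
  proof (intro equalityI subsetI)
    fix B assume "B \<in> ?f ` ?H"
    then obtain a b where "a \<in> S" "b \<in> S" "a < b" "B = {a,b}" by auto
    then show "B \<in> {B. B \<subseteq> S \<and> card B = 2}" by auto
  next
    fix B assume "B \<in> {B. B \<subseteq> S \<and> card B = 2}"
    then obtain a b where ab: "B = {a,b}" "a \<noteq> b" "B \<subseteq> S" unfolding card_2_iff by auto
    have "(min a b, max a b) \<in> ?H" using ab by (auto simp: min_def max_def)
    moreover have "B = ?f (min a b, max a b)" using ab by (auto simp: min_def max_def)
    ultimately show "B \<in> ?f ` ?H" by blast
  qed
  have "card ?H = card (?f ` ?H)" using card_image[OF inj] by simp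
  also have "\<dots> = card S choose 2" unfolding img by (rule n_subsets[OF assms])
  finally show ?thesis .
qed

lemma deficit_lower:
  assumes of: "one_factorization n c" and S: "S \<subseteq> {0..<n}"
  shows "deficit c S \<ge> int (card {(x,y). x \<in> S \<and> y \<in> S \<and> x < y \<and> c x y < t}) - int t"
proof -
  let ?H = "{(x,y). x \<in> S \<and> y \<in> S \<and> x < (y::nat)}"
  let ?A = "{(x,y). x \<in> S \<and> y \<in> S \<and> x < y \<and> c x y < t}"
  let ?g = "\<lambda>(x,y). c x y"
  have fS: "finite S" using S finite_subset by blast
  have fH: "finite ?H" using finite_subset[of ?H "S \<times> S"] fS by auto
  have AH: "?A \<subseteq> ?H" by auto
  have col: "colours_in c S = ?g ` ?H"
  proof (intro equalityI subsetI)
    fix z assume "z \<in> colours_in c S"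
    then obtain x y where xy: "x \<in> S" "y \<in> S" "x \<noteq> y" "z = c x y" unfolding colours_in_def by blast
    show "z \<in> ?g ` ?H"
    proof (cases "x < y")
      case True then show ?thesis using xy by (auto intro: image_eqI[of _ _ "(x,y)"])
    next
      case False
      have "x < n" "y < n" using xy S by auto
      then have "c x y = c y x" using of_sym[OF of] xy(3) by blast
      moreover have "(y,x) \<in> ?H" using xy False by auto
      ultimately show ?thesis using xy by (auto intro: image_eqI[of _ _ "(y,x)"])
    qed
  next
    fix z assume "z \<in> ?g ` ?H"
    then show "z \<in> colours_in c S" unfolding colours_in_def by auto
  qed
  have "gamma c S = card (?g ` ?A \<union> ?g ` (?H - ?A))"
    unfolding gamma_def col by (rule arg_cong[where f=card]) blast
  then have "gamma c S \<le> card (?g ` ?A) + card (?g ` (?H - ?A))"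
    using card_Un_le[of "?g ` ?A" "?g ` (?H - ?A)"] by simp
  also have "card (?g ` ?A) \<le> t"
  proof -
    have "?g ` ?A \<subseteq> {0..<t}" by auto
    then show ?thesis using card_mono[of "{0..<t}"] by fastforce
  qed
  also have "card (?g ` (?H - ?A)) \<le> card (?H - ?A)" by (rule card_image_le) (use fH in auto)
  also have "card (?H - ?A) = card ?H - card ?A" by (rule card_Diff_subset) (use fH finite_subset[OF AH] in auto)
  finally have "gamma c S \<le> t + card ?H - card ?A" using card_mono[OF fH AH] by linarith
  moreover have "card ?A \<le> card ?H" using card_mono[OF fH AH] .
  ultimately show ?thesis unfolding deficit_def card_pairs[OF fS, symmetric] by linarith
qed

lemma ln2_ge: "ln (2::real) \<ge> 1/2"
proof -
  have "exp (1/2::real) * exp (1/2) = exp 1" by (simp flip: exp_add)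
  then have "exp (1/2::real) * exp (1/2) \<le> 2 * 2" using exp_le by simp
  then have "exp (1/2::real) \<le> 2"
  proof (rule contrapos_pp)
    assume "\<not> exp (1/2::real) \<le> 2"
    then have "2 < exp (1/2::real)" by simp
    then have "2 * 2 < exp (1/2::real) * exp (1/2)" by (intro mult_strict_mono) auto
    then show "\<not> exp (1/2::real) * exp (1/2) \<le> 2 * 2" by simp
  qed
  then show ?thesis by (subst ln_ge_iff) auto
qed

lemma part2_one:
  fixes d :: int
  assumes d: "d \<ge> -2"
  defines "t \<equiv> nat d + 8"
  defines "Q \<equiv> nat (int t + d)"
  assumes n: "even n" "n \<ge> t + 3" and of: "one_factorization n c"
  shows "\<exists>S k. S \<subseteq> {0..<n} \<and> card S = k \<and> 1 \<le> k \<and> real k \<le> real (8 * (Q + 1)) * ln (real n) \<and>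
                      deficit c S \<ge> int k + d"
proof -
  define adj where "adj x y \<longleftrightarrow> x < n \<and> y < n \<and> x \<noteq> y \<and> c x y < t" for x y
  interpret g: grph adj n 0
    by unfold_locales (use n of_sym[OF of] in \<open>auto simp: adj_def\<close>)
  have deg: "\<forall>x<n. card {y. adj x y} \<ge> t"
  proof (intro allI impI)
    fix x assume x: "x < n"
    have "{0..<t} \<subseteq> c x ` {y. adj x y}"
    proof
      fix col assume "col \<in> {0..<t}"
      then have "col < n - 1" using n by auto
      then obtain z where "z < n" "z \<noteq> x" "c x z = col" using of_surj[OF of x] by blast
      then show "col \<in> c x ` {y. adj x y}" using x \<open>col \<in> {0..<t}\<close> by (auto simp: adj_def)
    qed
    moreover have "finite {y. adj x y}"
    proof -
      have "{y. adj x y} \<subseteq> {0..<n}" by (auto simp: adj_def)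
      then show ?thesis by (rule finite_subset) simp
    qed
    ultimately have "t \<le> card (c x ` {y. adj x y})" using card_mono[of "c x ` {y. adj x y}" "{0..<t}"] by simp
    also have "\<dots> \<le> card {y. adj x y}" by (rule card_image_le) fact
    finally show "t \<le> card {y. adj x y}" .
  qed
  define R where "R = (LEAST R. n < 2 ^ R)"
  have ex: "n < 2 ^ n" by (rule less_exp)
  have nR: "n < 2 ^ R" unfolding R_def by (rule LeastI[of _ n]) (rule ex)
  have R1: "R \<ge> 1" using nR n by (cases R) auto
  have nR': "2 ^ (R - 1) \<le> n"
  proof -
    have "\<not> n < 2 ^ (R - 1)" unfolding R_def by (rule not_less_Least) (use R1 in \<open>simp add: R_def\<close>)
    then show ?thesis by simp
  qed
  have cond: "2 * Q \<le> (t - 4) * (t + 1) + 2"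
  proof -
    have "(t - 4) * (t + 1) = (nat d + 4) * (nat d + 9)" unfolding t_def by (simp add: add.commute)
    also have "\<dots> = nat d * nat d + 13 * nat d + 36" by (simp add: algebra_simps)
    finally have "(t - 4) * (t + 1) \<ge> 13 * nat d + 36" by simp
    moreover have "int Q \<le> int t + int (nat d) + 2" unfolding Q_def using d by simp
    then have "Q \<le> 2 * nat d + 10" unfolding t_def by (cases "0 \<le> d") auto
    ultimately show ?thesis by linarith
  qed
  obtain X where X: "X \<subseteq> {0..<n}" "X \<noteq> {}" "card X \<le> 2 * (Q + 1) * (R + 1)" "card (g.E X) \<ge> card X + Q"
    using g.main_graph[OF deg _ cond nR] t_def by auto
  have EX: "g.E X = {(x,y). x \<in> X \<and> y \<in> X \<and> x < y \<and> c x y < t}"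
    using X(1) unfolding g.E_def adj_def by auto
  have "deficit c X \<ge> int (card (g.E X)) - int t" using deficit_lower[OF of X(1), of t] EX by simp
  moreover have "int Q = int t + d" unfolding Q_def t_def using d by simp
  ultimately have def: "deficit c X \<ge> int (card X) + d" using X(4) by linarith
  have fX: "finite X" using X(1) finite_subset by blast
  have k1: "1 \<le> card X" using X(2) fX by (simp add: Suc_le_eq card_gt_0_iff)
  have n3: "real n \<ge> 3" using n unfolding t_def by simp
  have lnn: "ln (real n) \<ge> 1" using n3 exp_le by (subst ln_ge_iff) auto
  have "real (2 ^ (R - 1)) \<le> real n" using nR' by (simp only: of_nat_le_iff)
  then have "ln (2 ^ (R - 1)) \<le> ln (real n)" using n3 by simp
  then have "real (R - 1) * ln 2 \<le> ln (real n)" by (simp add: ln_realpow)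
  moreover have "real (R - 1) * (1/2) \<le> real (R - 1) * ln 2" using ln2_ge by (intro mult_left_mono) auto
  ultimately have "real (R - 1) \<le> 2 * ln (real n)" by linarith
  then have Rb: "real (R + 1) \<le> 4 * ln (real n)" using R1 lnn by (simp add: of_nat_diff)
  have "real (card X) \<le> real (2 * (Q + 1) * (R + 1))" using X(3) by (simp only: of_nat_le_iff)
  also have "\<dots> = real (2 * (Q + 1)) * real (R + 1)" by (simp only: of_nat_mult)
  also have "\<dots> \<le> real (2 * (Q + 1)) * (4 * ln (real n))" using Rb by (intro mult_left_mono) auto
  also have "\<dots> = real (8 * (Q + 1)) * ln (real n)" by (simp add: algebra_simps)
  finally show ?thesis using X(1) k1 def by blast
qed

lemma part2:
  "\<forall>d::int. d \<ge> -2 \<longrightarrow>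
            (\<exists>C::real. C > 0 \<and> (\<exists>n0::nat. \<forall>n c. even n \<and> n \<ge> n0 \<and> one_factorization n c \<longrightarrow>
               (\<exists>S k. S \<subseteq> {0..<n} \<and> card S = k \<and> 1 \<le> k \<and> real k \<le> C * ln (real n) \<and>
                      deficit c S \<ge> int k + d)))"
proof (intro allI impI)
  fix d :: int assume d: "d \<ge> -2"
  let ?t = "nat d + 8"
  let ?Q = "nat (int ?t + d)"
  show "\<exists>C::real. C > 0 \<and> (\<exists>n0::nat. \<forall>n c. even n \<and> n \<ge> n0 \<and> one_factorization n c \<longrightarrow>
               (\<exists>S k. S \<subseteq> {0..<n} \<and> card S = k \<and> 1 \<le> k \<and> real k \<le> C * ln (real n) \<and>
                      deficit c S \<ge> int k + d))"
    apply (rule exI[of _ "real (8 * (?Q + 1))"])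
    apply (intro conjI)
     apply simp
    apply (rule exI[of _ "?t + 3"])
    using part2_one[OF d] by blast
qed


theorem theorem4:
  shows "(\<forall>n k c. even n \<and> 4 \<le> k \<and> k \<le> n \<and> one_factorization n c \<longrightarrow>
            (\<exists>S. S \<subseteq> {0..<n} \<and> card S = k \<and> deficit c S \<ge> int k - 3))
       \<and> (\<forall>d::int. d \<ge> -2 \<longrightarrow>
            (\<exists>C::real. C > 0 \<and> (\<exists>n0::nat. \<forall>n c. even n \<and> n \<ge> n0 \<and> one_factorization n c \<longrightarrow>
               (\<exists>S k. S \<subseteq> {0..<n} \<and> card S = k \<and> 1 \<le> k \<and> real k \<le> C * ln (real n) \<and>
                      deficit c S \<ge> int k + d))))"
  using part1 part2 by blast

end
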